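(* Fix $\sigma>0$ and let $f_M$ be the single-epoch DP-SGD random-shuffling trade-off function with $M$ rounds and noise multiplier $\sigma$; let $\mu_M=\sqrt{(e^{1/\sigma^2}-1)/(M-1)}$. Let $(E_M)$ be positive integers with $E_M=O(M)$. Then there is a constant $C$ such that for all sufficiently large $M$, $$\mathrm{sep}\big(f_M^{\otimes E_M}\big)\le C\,\mu_M\sqrt{E_M}.$$
   Context: Fix a noise multiplier $\sigma>0$ and an integer $M\ge2$. Write $\mathrm{n}(x)=e^{-x^2/2}/\sqrt{2\pi}$ and $\Phi(x)=\int_{-\infty}^x\mathrm{n}(t)\,dt$. Let $P_0$ be the law on $\mathbb R^M$ of $(X_1,\dots,X_M)$ with i.i.d. $N(0,1)$ coordinates, and $P_1$ the law obtained by drawing $J$ uniformly from $\{1,\dots,M\}$ and then, independently, $X_J\sim N(1/\sigma,1)$ and $X_i\sim N(0,1)$ for $i\neq J$, all independent. For a (randomized) rejection rule $\phi:\mathbb R^M\to[0,1]$ let $\alpha(\phi)=\mathbb E_{P_0}[\phi]$, $\beta(\phi)=1-\mathbb E_{P_1}[\phi]$. For distributions $P,Q$ the trade-off function is $T(P,Q)(a)=\inf\{\beta(\phi):\alpha(\phi)\le a\}$, $a\in[0,1]$. The single-epoch DP-SGD random-shuffling trade-off function with $M$ rounds and noise multiplier $\sigma$ is $f=T(P_0,P_1)$. For trade-off functions $f=T(P,Q)$, $g=T(P',Q')$, the composition is $f\otimes g=T(P\times P',Q\times Q')$, and $f^{\otimes E}$ denotes the $E$-fold composition. The separation of a trade-off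 function $f$ from the diagonal is $\mathrm{sep}(f)=\max_{a\in[0,1]}\min_{\gamma\in[0,1]}\|(a,f(a))-(\gamma,1-\gamma)\|_2$. *)

theory Defs
  imports "HOL-Probability.Probability" "HOL-Library.Landau_Symbols"
begin

definition gauss1 :: "real \<Rightarrow> real measure" where
  "gauss1 m = density lborel (normal_density m 1)"

definition dpsgd_P0 :: "nat \<Rightarrow> (nat \<Rightarrow> real) measure" where
  "dpsgd_P0 M = PiM {..<M} (\<lambda>_. gauss1 0)"

definition dpsgd_P1 :: "real \<Rightarrow> nat \<Rightarrow> (nat \<Rightarrow> real) measure" where
  "dpsgd_P1 \<sigma> M = measure_pmf (pmf_of_set {..<M}) \<bind>
      (\<lambda>J. PiM {..<M} (\<lambda>i. if i = J then gauss1 (1 / \<sigma>) else gauss1 0))"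

definition tradeoff :: "'a measure \<Rightarrow> 'a measure \<Rightarrow> real \<Rightarrow> real" where
  "tradeoff P Q a = Inf {1 - (\<integral>x. \<phi> x \<partial>Q) | \<phi>.
      \<phi> \<in> borel_measurable P \<and> (\<forall>x \<in> space P. 0 \<le> \<phi> x \<and> \<phi> x \<le> 1)
      \<and> (\<integral>x. \<phi> x \<partial>P) \<le> a}"

text \<open>E-fold composition of the single-epoch shuffling trade-off function: T(P0^E, P1^E).\<close>
definition dpsgd_tradeoff_comp :: "real \<Rightarrow> nat \<Rightarrow> nat \<Rightarrow> real \<Rightarrow> real" where
  "dpsgd_tradeoff_comp \<sigma> M E =
     tradeoff (PiM {..<E} (\<lambda>_. dpsgd_P0 M)) (PiM {..<E} (\<lambda>_. dpsgd_P1 \<sigma> M))"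

definition sep :: "(real \<Rightarrow> real) \<Rightarrow> real" where
  "sep f = (SUP a\<in>{0..1}. INF \<gamma>\<in>{0..1}. dist (a, f a) (\<gamma>, 1 - \<gamma>))"

end

theory Submission
  imports Defs
begin


lemma prob_gauss1: "prob_space (gauss1 m)"
  unfolding gauss1_def by (rule prob_space_normal_density) simp

lemma sets_gauss1[simp, measurable_cong]: "sets (gauss1 m) = sets borel"
  unfolding gauss1_def by simp

lemma space_gauss1[simp]: "space (gauss1 m) = UNIV"
  unfolding gauss1_def by simp

definition gr :: "real \<Rightarrow> real \<Rightarrow> real" where
  "gr a t = exp (a * t - a\<^sup>2 / 2)"

lemma gr_pos: "gr a t > 0" unfolding gr_def by simp

lemma gr_meas[measurable]: "gr a \<in> borel_measurable borel"
  unfolding gr_def by measurable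

lemma gauss1_density: "gauss1 a = density (gauss1 0) (\<lambda>t. ennreal (gr a t))"
proof -
  have "density (gauss1 0) (\<lambda>t. ennreal (gr a t)) =
        density lborel (\<lambda>t. ennreal (normal_density 0 1 t) * ennreal (gr a t))"
    unfolding gauss1_def by (subst density_density_eq) (auto simp: normal_density_def)
  also have "\<dots> = density lborel (\<lambda>t. ennreal (normal_density a 1 t))"
  proof (rule density_cong)
    show "(\<lambda>t. ennreal (normal_density 0 1 t) * ennreal (gr a t)) \<in> borel_measurable lborel"
      unfolding normal_density_def gr_def by measurable
    show "(\<lambda>t. ennreal (normal_density a 1 t)) \<in> borel_measurable lborel"
      unfolding normal_density_def by measurable
    have "normal_density 0 1 t * gr a t = normal_density a 1 t" for t
      unfolding normal_density_def gr_def
      by (simp add: mult_exp_exp power2_diff field_simps)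
    then show "AE t in lborel. ennreal (normal_density 0 1 t) * ennreal (gr a t) = ennreal (normal_density a 1 t)"
      by (simp add: ennreal_mult'[symmetric] normal_density_nonneg)
  qed
  finally show ?thesis unfolding gauss1_def by simp
qed

lemma gr_integrable: "integrable (gauss1 0) (gr a)"
proof -
  interpret prob_space "gauss1 a" by (rule prob_gauss1)
  have "integrable (gauss1 a) (\<lambda>_. 1::real)" by simp
  then have "integrable (density (gauss1 0) (\<lambda>t. ennreal (gr a t))) (\<lambda>_. 1::real)"
    by (simp add: gauss1_density[symmetric])
  then show ?thesis
    by (subst (asm) integrable_density) (auto simp: gr_pos less_imp_le)
qed

lemma gr_integral: "(\<integral>t. gr a t \<partial>gauss1 0) = 1"
proof -
  interpret prob_space "gauss1 a" by (rule prob_gauss1)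
  have "(\<integral>t. 1 \<partial>gauss1 a) = (1::real)" using prob_space by simp
  then have "(\<integral>t. 1 \<partial>density (gauss1 0) (\<lambda>t. ennreal (gr a t))) = (1::real)"
    by (simp add: gauss1_density[symmetric])
  then show ?thesis
    by (subst (asm) integral_density) (auto simp: gr_pos less_imp_le)
qed

lemma gr_sq: "gr a t * gr a t = exp (a\<^sup>2) * gr (2*a) t"
  unfolding gr_def mult_exp_exp by (rule arg_cong[where f=exp]) (simp add: algebra_simps power2_eq_square)

lemma gr_sq_integrable: "integrable (gauss1 0) (\<lambda>t. gr a t * gr a t)"
  unfolding gr_sq using gr_integrable by simp

lemma gr_sq_integral: "(\<integral>t. gr a t * gr a t \<partial>gauss1 0) = exp (a\<^sup>2)"
  unfolding gr_sq using gr_integral by simp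



lemma PiM_density:
  fixes M :: "'a measure" and f :: "'i \<Rightarrow> 'a \<Rightarrow> ennreal"
  assumes fin: "finite I" and sf: "sigma_finite_measure M"
    and meas: "\<And>i. f i \<in> borel_measurable M"
    and ps: "\<And>i. prob_space (density M (f i))"
  shows "PiM I (\<lambda>i. density M (f i)) = density (PiM I (\<lambda>_. M)) (\<lambda>x. \<Prod>i\<in>I. f i (x i))"
proof -
  interpret N: product_sigma_finite "\<lambda>i. density M (f i)"
    unfolding product_sigma_finite_def using ps prob_space_imp_sigma_finite by auto
  interpret Mp: product_sigma_finite "\<lambda>_. M"
    unfolding product_sigma_finite_def using sf by auto
  have [measurable]: "(\<lambda>x. \<Prod>i\<in>I. f i (x i)) \<in> borel_measurable (PiM I (\<lambda>_. M))"
    using meas by measurable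
  show ?thesis
  proof (rule N.PiM_eqI[symmetric, OF fin])
    show "sets (density (PiM I (\<lambda>_. M)) (\<lambda>x. \<Prod>i\<in>I. f i (x i))) = sets (PiM I (\<lambda>i. density M (f i)))"
      unfolding sets_density by (rule sets_PiM_cong) simp_all
    fix A assume A: "\<And>i. i \<in> I \<Longrightarrow> A i \<in> sets (density M (f i))"
    then have A': "\<And>i. i \<in> I \<Longrightarrow> A i \<in> sets M" by simp
    have PA: "PiE I A \<in> sets (PiM I (\<lambda>_. M))"
      using A' by (intro sets_PiM_I_finite fin) auto
    have "emeasure (density (PiM I (\<lambda>_. M)) (\<lambda>x. \<Prod>i\<in>I. f i (x i))) (PiE I A)
        = (\<integral>\<^sup>+x. (\<Prod>i\<in>I. f i (x i)) * indicator (PiE I A) x \<partial>PiM I (\<lambda>_. M))"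
      using PA by (subst emeasure_density) auto
    also have "\<dots> = (\<integral>\<^sup>+x. (\<Prod>i\<in>I. f i (x i) * indicator (A i) (x i)) \<partial>PiM I (\<lambda>_. M))"
    proof (rule nn_integral_cong)
      fix x assume x: "x \<in> space (PiM I (\<lambda>_. M))"
      show "(\<Prod>i\<in>I. f i (x i)) * indicator (PiE I A) x = (\<Prod>i\<in>I. f i (x i) * indicator (A i) (x i))"
      proof (cases "\<forall>i\<in>I. x i \<in> A i")
        case True
        then have "x \<in> PiE I A" using x by (auto simp: space_PiM PiE_def)
        then show ?thesis using True by (simp add: indicator_def)
      next
        case False
        then obtain j where j: "j \<in> I" "x j \<notin> A j" by auto
        then have "x \<notin> PiE I A" by auto
        moreover have "(\<Prod>i\<in>I. f i (x i) * indicator (A i) (x i)) = 0"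
          using j fin by (intro prod_zero) (auto intro!: bexI[of _ j])
        ultimately show ?thesis by simp
      qed
    qed
    also have "\<dots> = (\<Prod>i\<in>I. \<integral>\<^sup>+t. f i t * indicator (A i) t \<partial>M)"
      using A' meas by (intro Mp.product_nn_integral_prod fin) (auto intro!: borel_measurable_times_ennreal borel_measurable_indicator)
    also have "\<dots> = (\<Prod>i\<in>I. emeasure (density M (f i)) (A i))"
      using A' meas by (intro prod.cong refl) (simp add: emeasure_density)
    finally show "emeasure (density (PiM I (\<lambda>_. M)) (\<lambda>x. \<Prod>i\<in>I. f i (x i))) (PiE I A)
        = (\<Prod>i\<in>I. emeasure (density M (f i)) (A i))" .
  qed
qed



definition Lr :: "real \<Rightarrow> nat \<Rightarrow> (nat \<Rightarrow> real) \<Rightarrow> real" where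
  "Lr a M x = (\<Sum>j<M. gr a (x j)) / real M"

lemma Lr_meas[measurable]: "Lr a M \<in> borel_measurable (dpsgd_P0 M)"
  unfolding Lr_def dpsgd_P0_def by measurable

lemma comp_meas[measurable]: "J < M \<Longrightarrow> (\<lambda>x. gr a (x J)) \<in> borel_measurable (dpsgd_P0 M)"
  unfolding dpsgd_P0_def by measurable

lemma Lr_nonneg: "Lr a M x \<ge> 0"
  unfolding Lr_def by (auto intro!: sum_nonneg divide_nonneg_nonneg simp: gr_pos less_imp_le)

lemma sf_gauss0: "sigma_finite_measure (gauss1 0)"
  using prob_gauss1 prob_space_imp_sigma_finite by blast

lemma prob_P0: "prob_space (dpsgd_P0 M)"
  unfolding dpsgd_P0_def by (intro prob_space_PiM prob_gauss1)

lemma sets_P0: "sets (dpsgd_P0 M) = sets (PiM {..<M} (\<lambda>_. borel))"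
  unfolding dpsgd_P0_def by (rule sets_PiM_cong) auto

lemma shifted_density:
  assumes J: "J < M"
  shows "PiM {..<M} (\<lambda>i. if i = J then gauss1 a else gauss1 0)
       = density (dpsgd_P0 M) (\<lambda>x. ennreal (gr a (x J)))"
proof -
  define f where "f = (\<lambda>i t. if i = J then ennreal (gr a t) else 1)"
  have fam: "(\<lambda>i. if i = J then gauss1 a else gauss1 0) = (\<lambda>i. density (gauss1 0) (f i))"
  proof (rule ext)
    fix i show "(if i = J then gauss1 a else gauss1 0) = density (gauss1 0) (f i)"
      by (cases "i = J") (simp_all add: f_def density_1 gauss1_density[of a, symmetric])
  qed
  have fm: "f i \<in> borel_measurable (gauss1 0)" for i
    unfolding f_def by measurable
  have ps: "prob_space (density (gauss1 0) (f i))" for i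
    using fam[THEN fun_cong, of i] prob_gauss1 by (metis (full_types))
  have "PiM {..<M} (\<lambda>i. density (gauss1 0) (f i)) = density (dpsgd_P0 M) (\<lambda>x. \<Prod>i\<in>{..<M}. f i (x i))"
    unfolding dpsgd_P0_def
    by (rule PiM_density) (auto simp: sf_gauss0 ps fm)
  also have "(\<lambda>x. \<Prod>i\<in>{..<M}. f i (x i)) = (\<lambda>x. ennreal (gr a (x J)))"
    using J by (simp add: f_def prod.delta)
  finally show ?thesis using fam by simp
qed

lemma P1_density:
  assumes M: "M > 0" and a: "a = 1 / \<sigma>"
  shows "dpsgd_P1 \<sigma> M = density (dpsgd_P0 M) (\<lambda>x. ennreal (Lr a M x))"
proof -
  define N where "N J = PiM {..<M} (\<lambda>i. if i = J then gauss1 a else gauss1 0)" for J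
  have P1: "dpsgd_P1 \<sigma> M = measure_pmf (pmf_of_set {..<M}) \<bind> N"
    unfolding dpsgd_P1_def N_def a by simp
  have setsN: "sets (N J) = sets (dpsgd_P0 M)" for J
    unfolding N_def dpsgd_P0_def by (rule sets_PiM_cong) auto
  have probN: "prob_space (N J)" for J
    unfolding N_def by (intro prob_space_PiM) (auto intro: prob_gauss1)
  have measN: "N \<in> measurable (measure_pmf (pmf_of_set {..<M})) (subprob_algebra (dpsgd_P0 M))"
    using probN setsN by (auto simp: space_subprob_algebra prob_space_imp_subprob_space)
  have ne: "{..<M} \<noteq> {}" using M by auto
  show ?thesis
    unfolding P1
  proof (rule measure_eqI)
    show "sets (measure_pmf (pmf_of_set {..<M}) \<bind> N) = sets (density (dpsgd_P0 M) (\<lambda>x. ennreal (Lr a M x)))"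
      using setsN by (subst sets_bind) auto
    fix X assume "X \<in> sets (measure_pmf (pmf_of_set {..<M}) \<bind> N)"
    then have X: "X \<in> sets (dpsgd_P0 M)" using setsN by (subst (asm) sets_bind) auto
    have "emeasure (measure_pmf (pmf_of_set {..<M}) \<bind> N) X
        = (\<integral>\<^sup>+J. emeasure (N J) X \<partial>measure_pmf (pmf_of_set {..<M}))"
      using measN X by (intro emeasure_bind) auto
    also have "\<dots> = (\<Sum>J<M. emeasure (N J) X) / of_nat M"
      using ne by (simp add: nn_integral_pmf_of_set)
    also have "\<dots> = (\<Sum>J<M. \<integral>\<^sup>+x. ennreal (gr a (x J)) * indicator X x \<partial>dpsgd_P0 M) * ennreal (1 / real M)"
    proof -
      have "emeasure (N J) X = \<integral>\<^sup>+x. ennreal (gr a (x J)) * indicator X x \<partial>dpsgd_P0 M" if "J < M" for J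
        unfolding N_def shifted_density[OF that] using X comp_meas[OF that]
        by (subst emeasure_density) auto
      moreover have "inverse (of_nat M :: ennreal) = ennreal (1 / real M)"
        using M by (subst ennreal_of_nat_eq_real_of_nat, subst inverse_ennreal) (auto simp: inverse_eq_divide)
      ultimately show ?thesis
        by (simp add: divide_ennreal_def)
    qed
    also have "\<dots> = (\<integral>\<^sup>+x. ennreal (Lr a M x) * indicator X x \<partial>dpsgd_P0 M)"
    proof -
      have "(\<Sum>J<M. \<integral>\<^sup>+x. ennreal (gr a (x J)) * indicator X x \<partial>dpsgd_P0 M)
          = \<integral>\<^sup>+x. (\<Sum>J<M. ennreal (gr a (x J)) * indicator X x) \<partial>dpsgd_P0 M"
        using X by (intro nn_integral_sum[symmetric]) auto
      moreover have "(\<Sum>J<M. ennreal (gr a (x J)) * indicator X x) * ennreal (1 / real M)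
            = ennreal (Lr a M x) * indicator X x" for x
      proof (cases "x \<in> X")
        case True
        have "(\<Sum>J<M. ennreal (gr a (x J))) = ennreal (\<Sum>J<M. gr a (x J))"
          by (rule sum_ennreal) (simp add: gr_pos less_imp_le)
        then show ?thesis using True unfolding Lr_def
          by (simp add: ennreal_mult'[symmetric] sum_nonneg gr_pos less_imp_le divide_inverse)
      qed simp
      ultimately show ?thesis
        using X by (simp add: nn_integral_multc[symmetric])
    qed
    also have "\<dots> = emeasure (density (dpsgd_P0 M) (\<lambda>x. ennreal (Lr a M x))) X"
      using X by (simp add: emeasure_density)
    finally show "emeasure (measure_pmf (pmf_of_set {..<M}) \<bind> N) X = emeasure (density (dpsgd_P0 M) (\<lambda>x. ennreal (Lr a M x))) X" .
  qed
qed



lemma psf_gauss: "product_sigma_finite (\<lambda>_::nat. gauss1 0)"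
  unfolding product_sigma_finite_def using sf_gauss0 by auto

lemma pair_int:
  assumes j: "j < M" and k: "k < M"
  shows "integrable (dpsgd_P0 M) (\<lambda>x. gr a (x j) * gr a (x k))"
    "(\<integral>x. gr a (x j) * gr a (x k) \<partial>dpsgd_P0 M) = (if j = k then exp (a\<^sup>2) else 1)"
proof -
  interpret product_sigma_finite "\<lambda>_::nat. gauss1 0" by (rule psf_gauss)
  interpret G: prob_space "gauss1 0" by (rule prob_gauss1)
  define h where "h = (\<lambda>i t. (if i = j then gr a t else 1) * (if i = k then gr a t else 1))"
  have hprod: "(\<Prod>i\<in>{..<M}. h i (x i)) = gr a (x j) * gr a (x k)" for x
    using j k by (simp add: h_def prod.distrib prod.delta)
  have hint: "integrable (gauss1 0) (h i)" for i
    unfolding h_def using gr_integrable gr_sq_integrable by (cases "i = j"; cases "i = k") auto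
  have hval: "integral\<^sup>L (gauss1 0) (h i) = (if i = j then (if j = k then exp (a\<^sup>2) else 1) else 1)" for i
    unfolding h_def using gr_integral gr_sq_integral
    by (cases "i = j"; cases "i = k") (auto simp: G.prob_space[unfolded space_gauss1])
  have "integrable (dpsgd_P0 M) (\<lambda>x. \<Prod>i\<in>{..<M}. h i (x i))"
    unfolding dpsgd_P0_def by (intro product_integrable_prod hint) auto
  then show "integrable (dpsgd_P0 M) (\<lambda>x. gr a (x j) * gr a (x k))"
    by (simp add: hprod)
  have "(\<integral>x. (\<Prod>i\<in>{..<M}. h i (x i)) \<partial>dpsgd_P0 M) = (\<Prod>i\<in>{..<M}. integral\<^sup>L (gauss1 0) (h i))"
    unfolding dpsgd_P0_def by (intro product_integral_prod hint) auto
  also have "\<dots> = (if j = k then exp (a\<^sup>2) else 1)"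
    using j by (simp add: hval prod.delta)
  finally show "(\<integral>x. gr a (x j) * gr a (x k) \<partial>dpsgd_P0 M) = (if j = k then exp (a\<^sup>2) else 1)"
    by (simp add: hprod)
qed

lemma single_int:
  assumes j: "j < M"
  shows "integrable (dpsgd_P0 M) (\<lambda>x. gr a (x j))"
    "(\<integral>x. gr a (x j) \<partial>dpsgd_P0 M) = 1"
proof -
  interpret product_sigma_finite "\<lambda>_::nat. gauss1 0" by (rule psf_gauss)
  interpret G: prob_space "gauss1 0" by (rule prob_gauss1)
  define h where "h = (\<lambda>i t. if i = j then gr a t else 1)"
  have hprod: "(\<Prod>i\<in>{..<M}. h i (x i)) = gr a (x j)" for x
    using j by (simp add: h_def prod.delta)
  have hint: "integrable (gauss1 0) (h i)" for i
    unfolding h_def using gr_integrable by (cases "i = j") auto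
  have hval: "integral\<^sup>L (gauss1 0) (h i) = 1" for i
    unfolding h_def using gr_integral by (cases "i = j") (auto simp: G.prob_space[unfolded space_gauss1])
  have "integrable (dpsgd_P0 M) (\<lambda>x. \<Prod>i\<in>{..<M}. h i (x i))"
    unfolding dpsgd_P0_def by (intro product_integrable_prod hint) auto
  then show "integrable (dpsgd_P0 M) (\<lambda>x. gr a (x j))"
    by (simp add: hprod)
  have "(\<integral>x. (\<Prod>i\<in>{..<M}. h i (x i)) \<partial>dpsgd_P0 M) = (\<Prod>i\<in>{..<M}. integral\<^sup>L (gauss1 0) (h i))"
    unfolding dpsgd_P0_def by (intro product_integral_prod hint) auto
  also have "\<dots> = 1"
    by (simp add: hval)
  finally show "(\<integral>x. gr a (x j) \<partial>dpsgd_P0 M) = 1"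
    by (simp add: hprod)
qed

lemma Lr_int:
  assumes M: "M > 0"
  shows "integrable (dpsgd_P0 M) (Lr a M)" "(\<integral>x. Lr a M x \<partial>dpsgd_P0 M) = 1"
proof -
  have eq: "Lr a M = (\<lambda>x. (\<Sum>j<M. gr a (x j)) / real M)"
    by (rule ext) (simp add: Lr_def)
  show "integrable (dpsgd_P0 M) (Lr a M)"
    unfolding eq using single_int(1) by (intro integrable_divide integrable_sum) auto
  have "(\<integral>x. (\<Sum>j<M. gr a (x j)) / real M \<partial>dpsgd_P0 M) = (\<Sum>j<M. \<integral>x. gr a (x j) \<partial>dpsgd_P0 M) / real M"
    using single_int(1) by (simp add: integral_sum)
  also have "\<dots> = 1" using M single_int(2) by simp
  finally show "(\<integral>x. Lr a M x \<partial>dpsgd_P0 M) = 1" unfolding eq .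
qed

lemma Lr2_int:
  assumes M: "M > 0"
  shows "integrable (dpsgd_P0 M) (\<lambda>x. Lr a M x * Lr a M x)"
    "(\<integral>x. Lr a M x * Lr a M x \<partial>dpsgd_P0 M) = 1 + (exp (a\<^sup>2) - 1) / real M"
proof -
  have eq: "(\<lambda>x. Lr a M x * Lr a M x) = (\<lambda>x. (\<Sum>j<M. \<Sum>k<M. gr a (x j) * gr a (x k)) / (real M * real M))"
    by (rule ext) (simp add: Lr_def sum_product)
  show "integrable (dpsgd_P0 M) (\<lambda>x. Lr a M x * Lr a M x)"
    unfolding eq
  proof (intro integrable_divide)
    show "integrable (dpsgd_P0 M) (\<lambda>x. \<Sum>j<M. \<Sum>k<M. gr a (x j) * gr a (x k))"
      by (rule Bochner_Integration.integrable_sum, rule Bochner_Integration.integrable_sum) (auto intro: pair_int(1))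
  qed
  have "(\<integral>x. (\<Sum>j<M. \<Sum>k<M. gr a (x j) * gr a (x k)) / (real M * real M) \<partial>dpsgd_P0 M)
     = (\<Sum>j<M. \<Sum>k<M. \<integral>x. gr a (x j) * gr a (x k) \<partial>dpsgd_P0 M) / (real M * real M)"
  proof -
    have inner: "(\<integral>x. (\<Sum>k<M. gr a (x j) * gr a (x k)) \<partial>dpsgd_P0 M) = (\<Sum>k<M. \<integral>x. gr a (x j) * gr a (x k) \<partial>dpsgd_P0 M)"
      if "j < M" for j
      using that by (intro Bochner_Integration.integral_sum pair_int(1)) auto
    have inti: "integrable (dpsgd_P0 M) (\<lambda>x. \<Sum>k<M. gr a (x j) * gr a (x k))" if "j < M" for j
      using that by (intro Bochner_Integration.integrable_sum pair_int(1)) auto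
    have "(\<integral>x. (\<Sum>j<M. \<Sum>k<M. gr a (x j) * gr a (x k)) \<partial>dpsgd_P0 M) = (\<Sum>j<M. \<integral>x. (\<Sum>k<M. gr a (x j) * gr a (x k)) \<partial>dpsgd_P0 M)"
      using inti by (intro Bochner_Integration.integral_sum) auto
    also have "\<dots> = (\<Sum>j<M. \<Sum>k<M. \<integral>x. gr a (x j) * gr a (x k) \<partial>dpsgd_P0 M)"
      using inner by (intro sum.cong) auto
    finally show ?thesis by (simp add: integral_divide_zero)
  qed
  also have "\<dots> = (\<Sum>j<M. \<Sum>k<M. (if j = k then exp (a\<^sup>2) else 1)) / (real M * real M)"
    using pair_int(2) by simp
  also have "(\<Sum>j<M. \<Sum>k<M. (if j = k then exp (a\<^sup>2) else 1)) = (\<Sum>j<M. (exp (a\<^sup>2) - 1) + real M)"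
  proof (rule sum.cong[OF refl])
    fix j assume "j \<in> {..<M}"
    then have "(\<Sum>k<M. (if j = k then exp (a\<^sup>2) else 1)) = (\<Sum>k<M. 1 + (if j = k then exp (a\<^sup>2) - 1 else 0))"
      by (intro sum.cong) auto
    also have "\<dots> = real M + (exp (a\<^sup>2) - 1)"
      using \<open>j \<in> {..<M}\<close> by (simp add: sum.distrib)
    finally show "(\<Sum>k<M. (if j = k then exp (a\<^sup>2) else 1)) = (exp (a\<^sup>2) - 1) + real M" by simp
  qed
  also have "(\<Sum>j<M. (exp (a\<^sup>2) - 1) + real M) / (real M * real M) = 1 + (exp (a\<^sup>2) - 1) / real M"
    using M by (simp add: field_simps)
  finally show "(\<integral>x. Lr a M x * Lr a M x \<partial>dpsgd_P0 M) = 1 + (exp (a\<^sup>2) - 1) / real M"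
    unfolding eq .
qed



lemma prob_dens_Lr:
  assumes M: "M > 0"
  shows "prob_space (density (dpsgd_P0 M) (\<lambda>x. ennreal (Lr a M x)))"
proof (rule prob_spaceI)
  have "emeasure (density (dpsgd_P0 M) (\<lambda>x. ennreal (Lr a M x))) (space (dpsgd_P0 M))
      = (\<integral>\<^sup>+x. ennreal (Lr a M x) \<partial>dpsgd_P0 M)"
    by (subst emeasure_density) (auto intro!: nn_integral_cong simp: indicator_def)
  also have "\<dots> = ennreal (\<integral>x. Lr a M x \<partial>dpsgd_P0 M)"
    using Lr_int[OF M] by (intro nn_integral_eq_integral) (auto simp: Lr_nonneg)
  also have "\<dots> = 1" using Lr_int[OF M] by simp
  finally show "emeasure (density (dpsgd_P0 M) (\<lambda>x. ennreal (Lr a M x))) (space (density (dpsgd_P0 M) (\<lambda>x. ennreal (Lr a M x)))) = 1"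
    by simp
qed

definition LE :: "real \<Rightarrow> nat \<Rightarrow> nat \<Rightarrow> (nat \<Rightarrow> nat \<Rightarrow> real) \<Rightarrow> real" where
  "LE a M E w = (\<Prod>e<E. Lr a M (w e))"

lemma LE_nonneg: "LE a M E w \<ge> 0"
  unfolding LE_def by (intro prod_nonneg) (auto simp: Lr_nonneg)

lemma LE_meas[measurable]: "LE a M E \<in> borel_measurable (PiM {..<E} (\<lambda>_. dpsgd_P0 M))"
  unfolding LE_def by measurable

lemma Q_density:
  assumes M: "M > 0" and a: "a = 1 / \<sigma>"
  shows "PiM {..<E} (\<lambda>_. dpsgd_P1 \<sigma> M) = density (PiM {..<E} (\<lambda>_. dpsgd_P0 M)) (\<lambda>w. ennreal (LE a M E w))"
proof -
  have "PiM {..<E} (\<lambda>_. dpsgd_P1 \<sigma> M) = PiM {..<E} (\<lambda>_. density (dpsgd_P0 M) (\<lambda>x. ennreal (Lr a M x)))"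
    using P1_density[OF M a] by simp
  also have "\<dots> = density (PiM {..<E} (\<lambda>_. dpsgd_P0 M)) (\<lambda>w. \<Prod>e\<in>{..<E}. ennreal (Lr a M (w e)))"
    by (rule PiM_density) (auto simp: prob_dens_Lr[OF M] prob_P0 prob_space_imp_sigma_finite)
  also have "(\<lambda>w. \<Prod>e\<in>{..<E}. ennreal (Lr a M (w e))) = (\<lambda>w. ennreal (LE a M E w))"
    by (rule ext) (simp add: LE_def prod_ennreal Lr_nonneg)
  finally show ?thesis .
qed

lemma psf_P0: "product_sigma_finite (\<lambda>_::nat. dpsgd_P0 M)"
  unfolding product_sigma_finite_def using prob_P0 prob_space_imp_sigma_finite by auto

lemma LE_int:
  assumes M: "M > 0"
  shows "integrable (PiM {..<E} (\<lambda>_. dpsgd_P0 M)) (LE a M E)"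
    "(\<integral>w. LE a M E w \<partial>PiM {..<E} (\<lambda>_. dpsgd_P0 M)) = 1"
    "integrable (PiM {..<E} (\<lambda>_. dpsgd_P0 M)) (\<lambda>w. LE a M E w * LE a M E w)"
    "(\<integral>w. LE a M E w * LE a M E w \<partial>PiM {..<E} (\<lambda>_. dpsgd_P0 M)) = (1 + (exp (a\<^sup>2) - 1) / real M) ^ E"
proof -
  interpret product_sigma_finite "\<lambda>_::nat. dpsgd_P0 M" by (rule psf_P0)
  have eq1: "LE a M E = (\<lambda>w. \<Prod>e\<in>{..<E}. Lr a M (w e))"
    by (rule ext) (simp add: LE_def)
  have eq2: "(\<lambda>w. LE a M E w * LE a M E w) = (\<lambda>w. \<Prod>e\<in>{..<E}. (\<lambda>x. Lr a M x * Lr a M x) (w e))"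
    by (rule ext) (simp add: LE_def prod.distrib)
  show "integrable (PiM {..<E} (\<lambda>_. dpsgd_P0 M)) (LE a M E)"
    unfolding eq1 by (intro product_integrable_prod Lr_int(1)[OF M]) auto
  show "(\<integral>w. LE a M E w \<partial>PiM {..<E} (\<lambda>_. dpsgd_P0 M)) = 1"
    unfolding eq1 by (subst product_integral_prod) (auto intro: Lr_int[OF M] simp: Lr_int(2)[OF M])
  show "integrable (PiM {..<E} (\<lambda>_. dpsgd_P0 M)) (\<lambda>w. LE a M E w * LE a M E w)"
    unfolding eq2 by (intro product_integrable_prod Lr2_int(1)[OF M]) auto
  show "(\<integral>w. LE a M E w * LE a M E w \<partial>PiM {..<E} (\<lambda>_. dpsgd_P0 M)) = (1 + (exp (a\<^sup>2) - 1) / real M) ^ E"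
    unfolding eq2 by (subst product_integral_prod) (auto intro: Lr2_int[OF M] simp: Lr2_int(2)[OF M])
qed



lemma tradeoff_bounds:
  assumes P: "prob_space P" and Q: "prob_space Q" and a: "0 \<le> a" "a \<le> 1"
    and H: "\<And>\<phi>. \<phi> \<in> borel_measurable P \<Longrightarrow> (\<forall>x\<in>space P. 0 \<le> \<phi> x \<and> \<phi> x \<le> 1) \<Longrightarrow>
              (\<integral>x. \<phi> x \<partial>Q) \<le> (\<integral>x. \<phi> x \<partial>P) + t"
  shows "1 - a - t \<le> tradeoff P Q a" "tradeoff P Q a \<le> 1 - a"
proof -
  define S where "S = {1 - (\<integral>x. \<phi> x \<partial>Q) | \<phi>.
      \<phi> \<in> borel_measurable P \<and> (\<forall>x \<in> space P. 0 \<le> \<phi> x \<and> \<phi> x \<le> 1)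
      \<and> (\<integral>x. \<phi> x \<partial>P) \<le> a}"
  have tr: "tradeoff P Q a = Inf S" unfolding S_def tradeoff_def by simp
  have intP: "(\<integral>x. a \<partial>P) = a" using prob_space.prob_space[OF P] by simp
  have intQ: "(\<integral>x. a \<partial>Q) = a" using prob_space.prob_space[OF Q] by simp
  have mem: "1 - a \<in> S"
    unfolding S_def using a intP intQ by (intro CollectI exI[of _ "\<lambda>_. a"]) auto
  have lb: "1 - a - t \<le> s" if "s \<in> S" for s
  proof -
    from that obtain \<phi> where s: "s = 1 - (\<integral>x. \<phi> x \<partial>Q)" and m: "\<phi> \<in> borel_measurable P"
      and r: "\<forall>x \<in> space P. 0 \<le> \<phi> x \<and> \<phi> x \<le> 1" and l: "(\<integral>x. \<phi> x \<partial>P) \<le> a"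
      unfolding S_def by blast
    from H[OF m r] l s show ?thesis by linarith
  qed
  show "1 - a - t \<le> tradeoff P Q a"
    unfolding tr using mem lb by (intro cInf_greatest) auto
  show "tradeoff P Q a \<le> 1 - a"
    unfolding tr using mem lb by (intro cInf_lower) (auto simp: bdd_below_def)
qed

lemma sep_bound:
  assumes "\<And>a. 0 \<le> a \<Longrightarrow> a \<le> 1 \<Longrightarrow> 1 - a - t \<le> f a \<and> f a \<le> 1 - a"
  shows "sep f \<le> t"
  unfolding sep_def
proof (rule cSUP_least)
  show "{0..1::real} \<noteq> {}" by simp
  fix a :: real assume a: "a \<in> {0..1}"
  have "(INF \<gamma>\<in>{0..1}. dist (a, f a) (\<gamma>, 1 - \<gamma>)) \<le> dist (a, f a) (a, 1 - a)"
    using a by (intro cINF_lower) (auto intro!: bdd_belowI[of _ 0])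
  also have "\<dots> = \<bar>f a - (1 - a)\<bar>"
    by (simp add: dist_Pair_Pair dist_real_def)
  also have "\<dots> \<le> t" using assms[of a] a by auto
  finally show "(INF \<gamma>\<in>{0..1}. dist (a, f a) (\<gamma>, 1 - \<gamma>)) \<le> t" .
qed

lemma amgm_aux:
  fixes t d p :: real
  assumes "t > 0" "0 \<le> p" "p \<le> 1"
  shows "p * d \<le> (t * t + d * d) / (2 * t)"
proof -
  have "p * d \<le> \<bar>d\<bar>" using assms mult_nonneg_nonpos[of p d] mult_left_le_one_le[of d p]
    by (cases "d \<ge> 0") auto
  moreover have "2 * t * \<bar>d\<bar> \<le> t * t + d * d"
  proof -
    have "0 \<le> (t - \<bar>d\<bar>) * (t - \<bar>d\<bar>)" by simp
    moreover have "\<bar>d\<bar> * \<bar>d\<bar> = d * d" by (simp add: abs_mult_self_eq)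
    ultimately show ?thesis by (simp add: algebra_simps)
  qed
  ultimately have "2 * t * (p * d) \<le> t * t + d * d"
    using assms mult_left_mono[of "p * d" "\<bar>d\<bar>" "2 * t"] by linarith
  then show ?thesis using assms by (simp add: field_simps)
qed



lemma test_bound:
  assumes M: "M > 0" and a: "a = 1 / \<sigma>"
    and Xdef: "X = (1 + (exp (a\<^sup>2) - 1) / real M) ^ E - 1" and Xpos: "X > 0"
    and m: "\<phi> \<in> borel_measurable (PiM {..<E} (\<lambda>_. dpsgd_P0 M))"
    and r: "\<forall>x\<in>space (PiM {..<E} (\<lambda>_. dpsgd_P0 M)). 0 \<le> \<phi> x \<and> \<phi> x \<le> 1"
  shows "(\<integral>x. \<phi> x \<partial>PiM {..<E} (\<lambda>_. dpsgd_P1 \<sigma> M)) \<le> (\<integral>x. \<phi> x \<partial>PiM {..<E} (\<lambda>_. dpsgd_P0 M)) + sqrt X"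
proof -
  define P where "P = PiM {..<E} (\<lambda>_. dpsgd_P0 M)"
  define L where "L = LE a M E"
  interpret P: prob_space P unfolding P_def by (intro prob_space_PiM prob_P0)
  define t where "t = sqrt X"
  have t: "t > 0" "t * t = X" using Xpos unfolding t_def by auto
  have [measurable]: "\<phi> \<in> borel_measurable P" "L \<in> borel_measurable P"
    using m unfolding P_def L_def by auto
  have Lnn: "L w \<ge> 0" for w unfolding L_def by (rule LE_nonneg)
  have intL: "integrable P L" "integral\<^sup>L P L = 1" "integrable P (\<lambda>w. L w * L w)"
    "(\<integral>w. L w * L w \<partial>P) = X + 1"
    using LE_int[OF M, of E a] unfolding P_def L_def Xdef by auto
  have Qeq: "(\<integral>x. \<phi> x \<partial>PiM {..<E} (\<lambda>_. dpsgd_P1 \<sigma> M)) = (\<integral>w. L w * \<phi> w \<partial>P)"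
    unfolding Q_density[OF M a] P_def[symmetric] L_def[symmetric]
    by (subst integral_density) (auto simp: Lnn)
  have intphi: "integrable P \<phi>"
    using r m by (intro P.integrable_const_bound[where B=1]) (auto intro!: AE_I2 simp: P_def)
  have intLphi: "integrable P (\<lambda>w. L w * \<phi> w)"
  proof (rule Bochner_Integration.integrable_bound[OF intL(1)])
    show "(\<lambda>w. L w * \<phi> w) \<in> borel_measurable P" by measurable
    show "AE x in P. norm (L x * \<phi> x) \<le> norm (L x)"
    proof (intro AE_I2)
      fix x assume "x \<in> space P"
      then have "0 \<le> \<phi> x" "\<phi> x \<le> 1" using r by (auto simp: P_def)
      then show "norm (L x * \<phi> x) \<le> norm (L x)"
        using Lnn[of x] mult_right_le_one_le[of "L x" "\<phi> x"] by (simp add: abs_mult)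
    qed
  qed
  define R where "R w = \<phi> w + (t / 2 + 1 / (2 * t)) + (1 / (2 * t)) * (L w * L w) - (1 / t) * L w" for w
  have intR: "integrable P R"
    unfolding R_def using intphi intL by auto
  have ptw: "L w * \<phi> w \<le> R w" if "w \<in> space P" for w
  proof -
    have "\<phi> w * (L w - 1) \<le> (t * t + (L w - 1) * (L w - 1)) / (2 * t)"
      using r that t by (intro amgm_aux) (auto simp: P_def)
    also have "\<dots> = t / 2 + 1 / (2 * t) + (1 / (2 * t)) * (L w * L w) - (1 / t) * L w"
      using t by (simp add: field_simps)
    finally show ?thesis unfolding R_def by (simp add: algebra_simps)
  qed
  have "(\<integral>w. L w * \<phi> w \<partial>P) \<le> integral\<^sup>L P R"
    using intLphi intR ptw by (intro integral_mono) auto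
  also have "integral\<^sup>L P R = integral\<^sup>L P \<phi> + (t / 2 + 1 / (2 * t)) + (1 / (2 * t)) * (X + 1) - (1 / t) * 1"
    unfolding R_def using intphi intL by (simp add: P.prob_space)
  also have "\<dots> = integral\<^sup>L P \<phi> + t"
    using t by (simp add: field_simps)
  finally show ?thesis unfolding Qeq t_def P_def .
qed



lemma sep_comp_bound:
  assumes s: "\<sigma> > 0" and M: "M \<ge> 2" and E: "E > 0"
  shows "sep (dpsgd_tradeoff_comp \<sigma> M E) \<le> sqrt ((1 + (exp (1 / \<sigma>\<^sup>2) - 1) / real M) ^ E - 1)"
proof -
  define a where "a = 1 / \<sigma>"
  define X where "X = (1 + (exp (a\<^sup>2) - 1) / real M) ^ E - 1"
  have M0: "M > 0" using M by simp
  have "a \<noteq> 0" using s unfolding a_def by simp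
  then have "a\<^sup>2 > 0" by simp
  then have "exp (a\<^sup>2) > 1" by simp
  then have "(exp (a\<^sup>2) - 1) / real M > 0" using M0 by simp
  then have "1 + (exp (a\<^sup>2) - 1) / real M > 1" by linarith
  then have Xpos: "X > 0" unfolding X_def using E by (simp add: one_less_power)
  have PP: "prob_space (PiM {..<E} (\<lambda>_. dpsgd_P0 M))" by (intro prob_space_PiM prob_P0)
  have P1p: "prob_space (dpsgd_P1 \<sigma> M)"
    unfolding P1_density[OF M0 a_def] by (rule prob_dens_Lr[OF M0])
  have QQ: "prob_space (PiM {..<E} (\<lambda>_. dpsgd_P1 \<sigma> M))"
    by (intro prob_space_PiM P1p)
  have H: "\<And>\<phi>. \<phi> \<in> borel_measurable (PiM {..<E} (\<lambda>_. dpsgd_P0 M)) \<Longrightarrow>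
      (\<forall>x\<in>space (PiM {..<E} (\<lambda>_. dpsgd_P0 M)). 0 \<le> \<phi> x \<and> \<phi> x \<le> 1) \<Longrightarrow>
      (\<integral>x. \<phi> x \<partial>PiM {..<E} (\<lambda>_. dpsgd_P1 \<sigma> M)) \<le> (\<integral>x. \<phi> x \<partial>PiM {..<E} (\<lambda>_. dpsgd_P0 M)) + sqrt X"
    by (rule test_bound[OF M0 a_def X_def Xpos])
  have B: "1 - b - sqrt X \<le> dpsgd_tradeoff_comp \<sigma> M E b \<and> dpsgd_tradeoff_comp \<sigma> M E b \<le> 1 - b"
    if "0 \<le> b" "b \<le> 1" for b
  proof -
    note tb = tradeoff_bounds[OF PP QQ that(1) that(2) H]
    show ?thesis unfolding dpsgd_tradeoff_comp_def using tb by (intro conjI)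
  qed
  have "sep (dpsgd_tradeoff_comp \<sigma> M E) \<le> sqrt X"
    by (rule sep_bound) (rule B)
  moreover have "X = (1 + (exp (1 / \<sigma>\<^sup>2) - 1) / real M) ^ E - 1"
    unfolding X_def a_def by (simp add: power_one_over)
  ultimately show ?thesis by simp
qed


lemma asym_bound:
  fixes c B :: real and M E :: nat
  assumes c: "c > 0" and B: "B > 0" and M: "M \<ge> 2" and EB: "real E \<le> B * real M"
  shows "sqrt ((1 + c / real M) ^ E - 1) \<le> sqrt (exp (c * B)) * sqrt (c / (real M - 1)) * sqrt (real E)"
proof -
  define y where "y = c * real E / real M"
  have M0: "real M > 0" "real M - 1 > 0" using M by auto
  have y0: "y \<ge> 0" unfolding y_def using c M0 by simp
  have yB: "y \<le> c * B" unfolding y_def using EB c M0 by (simp add: field_simps)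
  have "(1 + c / real M) ^ E \<le> exp (c / real M) ^ E"
    using c M0 by (intro power_mono) (auto simp: add_pos_nonneg)
  also have "\<dots> = exp y" unfolding y_def exp_of_nat_mult[symmetric] by simp
  finally have 1: "(1 + c / real M) ^ E - 1 \<le> exp y - 1" by simp
  have "exp y * (1 - y) \<le> 1"
  proof -
    have "1 + - y \<le> exp (- y)" by (rule exp_ge_add_one_self)
    then have "exp y * (1 - y) \<le> exp y * exp (- y)" by (intro mult_left_mono) auto
    then show ?thesis by (simp add: exp_minus)
  qed
  then have 3: "exp y - 1 \<le> y * exp y" by (simp add: algebra_simps)
  have 4: "y * exp y \<le> y * exp (c * B)" using y0 yB by (intro mult_left_mono) auto
  have "c * real E / real M \<le> c * real E / (real M - 1)" using c M0 by (intro divide_left_mono) auto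
  then have 5: "y \<le> c / (real M - 1) * real E" unfolding y_def
    by simp
  have 6: "y * exp (c * B) \<le> c / (real M - 1) * real E * exp (c * B)"
    using 5 by (intro mult_right_mono) auto
  have 2: "(1 + c / real M) ^ E - 1 \<le> exp (c * B) * (c / (real M - 1)) * real E"
    using 1 3 4 6 by (simp add: algebra_simps)
  have "sqrt ((1 + c / real M) ^ E - 1) \<le> sqrt (exp (c * B) * (c / (real M - 1)) * real E)"
    using 2 by (rule real_sqrt_le_mono)
  then show ?thesis by (simp only: real_sqrt_mult)
qed


theorem mainTheorem4:
  fixes \<sigma> :: real and E :: "nat \<Rightarrow> nat"
  assumes "\<sigma> > 0"
    and "\<forall>M\<ge>2. E M > 0"
    and "(\<lambda>M. real (E M)) \<in> O(\<lambda>M. real M)"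
  shows "\<exists>C. \<forall>\<^sub>F M in sequentially.
           sep (dpsgd_tradeoff_comp \<sigma> M (E M))
             \<le> C * sqrt ((exp (1 / \<sigma>\<^sup>2) - 1) / (real M - 1)) * sqrt (real (E M))"
proof -
  define c where "c = exp (1 / \<sigma>\<^sup>2) - 1"
  have c: "c > 0" unfolding c_def using assms(1) by simp
  from assms(3) obtain B where B: "B > 0"
    and ev: "eventually (\<lambda>M. norm (real (E M)) \<le> B * norm (real M)) at_top"
    by (elim landau_o.bigE)
  have "eventually (\<lambda>M. sep (dpsgd_tradeoff_comp \<sigma> M (E M))
             \<le> sqrt (exp (c * B)) * sqrt (c / (real M - 1)) * sqrt (real (E M))) sequentially"
    using ev eventually_ge_at_top[of "2::nat"]
  proof eventually_elim
    case (elim M)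
    then have EB: "real (E M) \<le> B * real M" by simp
    have "sep (dpsgd_tradeoff_comp \<sigma> M (E M)) \<le> sqrt ((1 + c / real M) ^ E M - 1)"
      using sep_comp_bound[OF assms(1) elim(2)] assms(2) elim(2) unfolding c_def by auto
    also have "\<dots> \<le> sqrt (exp (c * B)) * sqrt (c / (real M - 1)) * sqrt (real (E M))"
      by (rule asym_bound[OF c B elim(2) EB])
    finally show ?case .
  qed
  then show ?thesis unfolding c_def by blast
qed

end
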